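(* Consider $N\ge 2$ users indexed by $\mathcal{U}=\{1,\dots,N\}$ with fixed channel power gains $h_1,\dots,h_N>0$, noise variance $\eta>0$, target throughputs $\theta_1,\dots,\theta_N>0$, and strategy sets $\mathcal{P}^i=[0,P_i^{max}]$ with $P_i^{max}>0$. For $\mathbf{P}\in\prod_i\mathcal{P}^i$ let $r_i(\mathbf{P})=\log_2\!\big(1+\frac{h_iP_i}{\eta+\sum_{j\neq i}h_jP_j}\big)$, and let $\mathcal{S}$ be the set of profiles with $r_i(\mathbf{P})\ge\theta_i$ for all $i$. Suppose $\mathcal{S}\neq\emptyset$. Then an efficient satisfaction equilibrium $\mathbf{P}^+$ (a minimizer of $\sum_iP_i$ over $\mathcal{S}$) exists and is satisfactory Pareto optimal: for every $i\in\mathcal{U}$ and every $p\in\mathcal{P}^i$ with $r_i(p,\mathbf{P}^+_{-i})>r_i(\mathbf{P}^+)$, there exists $j\neq i$ with $r_j(p,\mathbf{P}^+_{-i})<\theta_j$.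
   Context: $(p,\mathbf{P}^+_{-i})$ denotes the profile obtained from $\mathbf{P}^+$ by replacing user $i$'s power with $p$. Satisfactory Pareto optimality means that no player can increase its payoff (by changing its own power) without dissatisfying (pushing below its target) some of its opponents. *)

theory Defs
  imports Complex_Main
begin

text \<open>Users are indexed by {1..N}; a power profile is a function nat => real,
  only its values on {1..N} matter.\<close>

definition throughput :: "nat \<Rightarrow> (nat \<Rightarrow> real) \<Rightarrow> real \<Rightarrow> (nat \<Rightarrow> real) \<Rightarrow> nat \<Rightarrow> real" where
  "throughput N h \<eta> P i =
     log 2 (1 + h i * P i / (\<eta> + (\<Sum>j\<in>{1..N} - {i}. h j * P j)))"

definition feasible_profile :: "nat \<Rightarrow> (nat \<Rightarrow> real) \<Rightarrow> (nat \<Rightarrow> real) \<Rightarrow> bool" where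
  "feasible_profile N Pmax P \<longleftrightarrow> (\<forall>i\<in>{1..N}. 0 \<le> P i \<and> P i \<le> Pmax i)"

definition satisfaction_set ::
  "nat \<Rightarrow> (nat \<Rightarrow> real) \<Rightarrow> real \<Rightarrow> (nat \<Rightarrow> real) \<Rightarrow> (nat \<Rightarrow> real) \<Rightarrow> (nat \<Rightarrow> real) set" where
  "satisfaction_set N h \<eta> \<theta> Pmax =
     {P. feasible_profile N Pmax P \<and> (\<forall>i\<in>{1..N}. throughput N h \<eta> P i \<ge> \<theta> i)}"

definition efficient_SE ::
  "nat \<Rightarrow> (nat \<Rightarrow> real) \<Rightarrow> real \<Rightarrow> (nat \<Rightarrow> real) \<Rightarrow> (nat \<Rightarrow> real) \<Rightarrow> (nat \<Rightarrow> real) \<Rightarrow> bool" where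
  "efficient_SE N h \<eta> \<theta> Pmax P \<longleftrightarrow>
     P \<in> satisfaction_set N h \<eta> \<theta> Pmax \<and>
     (\<forall>Q\<in>satisfaction_set N h \<eta> \<theta> Pmax. (\<Sum>i\<in>{1..N}. P i) \<le> (\<Sum>i\<in>{1..N}. Q i))"

definition satisfactory_pareto_optimal ::
  "nat \<Rightarrow> (nat \<Rightarrow> real) \<Rightarrow> real \<Rightarrow> (nat \<Rightarrow> real) \<Rightarrow> (nat \<Rightarrow> real) \<Rightarrow> (nat \<Rightarrow> real) \<Rightarrow> bool" where
  "satisfactory_pareto_optimal N h \<eta> \<theta> Pmax P \<longleftrightarrow>
     (\<forall>i\<in>{1..N}. \<forall>p. 0 \<le> p \<and> p \<le> Pmax i \<longrightarrow>
        throughput N h \<eta> (P(i := p)) i > throughput N h \<eta> P i \<longrightarrow>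
        (\<exists>j\<in>{1..N}. j \<noteq> i \<and> throughput N h \<eta> (P(i := p)) j < \<theta> j))"

end

theory Submission
  imports Defs
begin

lemma thr_iff:
  fixes h P :: "nat \<Rightarrow> real"
  assumes i: "i \<in> {1..N}" and nn: "\<forall>j\<in>{1..N}. 0 \<le> P j" and hp: "\<forall>j\<in>{1..N}. h j > 0"
    and eta: "\<eta> > 0"
  shows "throughput N h \<eta> P i \<ge> t \<longleftrightarrow>
         h i * P i \<ge> (1 - 1 / 2 powr t) * (\<eta> + (\<Sum>j\<in>{1..N}. h j * P j))"
proof -
  define D where "D = \<eta> + (\<Sum>j\<in>{1..N} - {i}. h j * P j)"
  define x where "x = h i * P i"
  define c where "c = (2::real) powr t"
  have c: "c > 0" unfolding c_def by simp
  have "(\<Sum>j\<in>{1..N} - {i}. h j * P j) \<ge> 0"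
    using nn hp by (intro sum_nonneg) (simp add: less_imp_le)
  then have D: "D > 0" unfolding D_def using eta by linarith
  have x: "x \<ge> 0" unfolding x_def using nn hp i by (simp add: less_imp_le)
  have T: "\<eta> + (\<Sum>j\<in>{1..N}. h j * P j) = D + x"
    unfolding D_def x_def using sum.remove[of "{1..N}" i "\<lambda>j. h j * P j"] i by simp
  have pos: "1 + x / D > 0" using x D by (simp add: add_pos_nonneg)
  have "throughput N h \<eta> P i \<ge> t \<longleftrightarrow> c \<le> 1 + x / D"
    unfolding throughput_def c_def D_def[symmetric] x_def[symmetric]
    using le_log_iff[of 2 "1 + x/D" t] pos by simp
  also have "\<dots> \<longleftrightarrow> c * D \<le> D + x" using D by (simp add: field_simps)
  also have "\<dots> \<longleftrightarrow> (1 - 1/c) * (D + x) \<le> x"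
  proof -
    have "(1 - 1/c) * (D + x) \<le> x \<longleftrightarrow> c * ((1 - 1/c) * (D + x)) \<le> c * x"
      using c by simp
    also have "c * ((1 - 1/c) * (D + x)) = (c - 1) * (D + x)" using c by (simp add: field_simps)
    finally show ?thesis by (simp add: algebra_simps)
  qed
  finally show ?thesis unfolding T c_def x_def by simp
qed

theorem corollary2:
  fixes N :: nat and h \<theta> Pmax :: "nat \<Rightarrow> real" and \<eta> :: real
  assumes "N \<ge> 2"
    and "\<forall>i\<in>{1..N}. h i > 0"
    and "\<eta> > 0"
    and "\<forall>i\<in>{1..N}. \<theta> i > 0"
    and "\<forall>i\<in>{1..N}. Pmax i > 0"
    and "satisfaction_set N h \<eta> \<theta> Pmax \<noteq> {}"
  shows "(\<exists>P. efficient_SE N h \<eta> \<theta> Pmax P) \<and>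
         (\<forall>P. efficient_SE N h \<eta> \<theta> Pmax P \<longrightarrow> satisfactory_pareto_optimal N h \<eta> \<theta> Pmax P)"
proof -
  note N = assms(1) and hp = assms(2) and eta = assms(3) and th = assms(4)
  define a where "a i = 1 - 1 / (2::real) powr \<theta> i" for i
  define T where "T P = (\<Sum>j\<in>{1..N}. h j * P j)" for P :: "nat \<Rightarrow> real"
  define A where "A = (\<Sum>i\<in>{1..N}. a i)"
  let ?S = "satisfaction_set N h \<eta> \<theta> Pmax"
  have apos: "a i > 0" if "i \<in> {1..N}" for i
  proof -
    have "(2::real) powr \<theta> i > 1" using th that by simp
    then show ?thesis unfolding a_def by (simp add: field_simps)
  qed
  have Tnn: "T P \<ge> 0" if "\<forall>j\<in>{1..N}. 0 \<le> P j" for P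
    unfolding T_def using that hp by (intro sum_nonneg) (simp add: less_imp_le)
  have satI: "\<forall>i\<in>{1..N}. h i * P i \<ge> a i * (\<eta> + T P)" if "P \<in> ?S" for P
  proof
    fix i assume i: "i \<in> {1..N}"
    from that have nn: "\<forall>j\<in>{1..N}. 0 \<le> P j" and t: "throughput N h \<eta> P i \<ge> \<theta> i"
      using i by (auto simp: satisfaction_set_def feasible_profile_def)
    show "h i * P i \<ge> a i * (\<eta> + T P)"
      using thr_iff[OF i nn hp eta, of "\<theta> i"] t unfolding a_def T_def by simp
  qed
  have sumI: "T P \<ge> A * (\<eta> + T P)" if "P \<in> ?S" for P
  proof -
    have "A * (\<eta> + T P) = (\<Sum>i\<in>{1..N}. a i * (\<eta> + T P))"
      unfolding A_def by (simp add: sum_distrib_right)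
    also have "\<dots> \<le> T P" unfolding T_def[of P] using satI[OF that]
      by (intro sum_mono) (simp add: T_def)
    finally show ?thesis .
  qed
  obtain P0 where P0: "P0 \<in> ?S" using assms(6) by blast
  have P0nn: "\<forall>j\<in>{1..N}. 0 \<le> P0 j" using P0 by (auto simp: satisfaction_set_def feasible_profile_def)
  have Apos: "A > 0" unfolding A_def using apos N by (intro sum_pos) auto
  have A1: "A < 1"
  proof (rule ccontr)
    assume "\<not> A < 1"
    then have "A * (\<eta> + T P0) \<ge> 1 * (\<eta> + T P0)"
      using Tnn[OF P0nn] eta by (intro mult_right_mono) auto
    then show False using sumI[OF P0] eta by simp
  qed
  define Ss where "Ss = A * \<eta> / (1 - A)"
  have Ss: "Ss \<ge> 0" unfolding Ss_def using Apos A1 eta by simp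
  have Ss_eq: "A * (\<eta> + Ss) = Ss" unfolding Ss_def using A1 by (simp add: field_simps)
  define Ps where "Ps j = (if j \<in> {1..N} then a j * (\<eta> + Ss) / h j else 0)" for j
  have hPs: "h j * Ps j = a j * (\<eta> + Ss)" if "j \<in> {1..N}" for j
  proof -
    have "h j \<noteq> 0" using that hp by (metis less_irrefl)
    then show ?thesis using that unfolding Ps_def by simp
  qed
  have TPs: "T Ps = Ss"
  proof -
    have "T Ps = (\<Sum>j\<in>{1..N}. a j * (\<eta> + Ss))" unfolding T_def by (rule sum.cong) (auto simp: hPs)
    also have "\<dots> = Ss" using Ss_eq unfolding A_def by (simp add: sum_distrib_right)
    finally show ?thesis .
  qed
  have geSs: "T P \<ge> Ss" if "P \<in> ?S" for P
  proof -
    have "T P * (1 - A) \<ge> A * \<eta>" using sumI[OF that] by (simp add: algebra_simps)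
    then show ?thesis unfolding Ss_def using A1 by (simp add: field_simps)
  qed
  have minimal: "Ps i \<le> P i" if "P \<in> ?S" "i \<in> {1..N}" for P i
  proof -
    have "h i * Ps i = a i * (\<eta> + Ss)" using hPs that(2) .
    also have "\<dots> \<le> a i * (\<eta> + T P)" using geSs[OF that(1)] apos[OF that(2)] by simp
    also have "\<dots> \<le> h i * P i" using satI[OF that(1)] that(2) by simp
    finally show ?thesis using hp that(2) by simp
  qed
  have PsS: "Ps \<in> ?S"
  proof -
    have nn: "\<forall>j\<in>{1..N}. 0 \<le> Ps j" unfolding Ps_def using apos hp eta Ss
      by (auto intro!: divide_nonneg_pos mult_nonneg_nonneg less_imp_le)
    have le: "\<forall>j\<in>{1..N}. Ps j \<le> Pmax j" using minimal[OF P0] P0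
      by (auto simp: satisfaction_set_def feasible_profile_def) (meson atLeastAtMost_iff order_trans)
    have "\<forall>i\<in>{1..N}. throughput N h \<eta> Ps i \<ge> \<theta> i"
    proof
      fix i assume i: "i \<in> {1..N}"
      show "throughput N h \<eta> Ps i \<ge> \<theta> i"
        using thr_iff[OF i nn hp eta, of "\<theta> i"] hPs[OF i] TPs unfolding a_def T_def by simp
    qed
    then show ?thesis using nn le by (auto simp: satisfaction_set_def feasible_profile_def)
  qed
  have effPs: "efficient_SE N h \<eta> \<theta> Pmax Ps"
    unfolding efficient_SE_def using PsS minimal by (auto intro: sum_mono)
  have "satisfactory_pareto_optimal N h \<eta> \<theta> Pmax P" if eff: "efficient_SE N h \<eta> \<theta> Pmax P" for P
  proof -
    have PS: "P \<in> ?S" using eff by (simp add: efficient_SE_def)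
    have "(\<Sum>i\<in>{1..N}. P i) \<le> (\<Sum>i\<in>{1..N}. Ps i)" using eff PsS by (simp add: efficient_SE_def)
    moreover have "(\<Sum>i\<in>{1..N}. Ps i) \<le> (\<Sum>i\<in>{1..N}. P i)" using minimal[OF PS] by (intro sum_mono) auto
    ultimately have eqs: "(\<Sum>i\<in>{1..N}. Ps i) = (\<Sum>i\<in>{1..N}. P i)" by linarith
    have PeqPs: "P j = Ps j" if "j \<in> {1..N}" for j
      using sum_mono_inv[OF eqs, of j] minimal[OF PS] that by auto
    have TP: "T P = Ss" unfolding TPs[symmetric] T_def using PeqPs by (intro sum.cong) auto
    have hP: "h j * P j = a j * (\<eta> + T P)" if "j \<in> {1..N}" for j
      using hPs[OF that] PeqPs[OF that] TP by simp
    have Pnn: "\<forall>j\<in>{1..N}. 0 \<le> P j" using PS by (auto simp: satisfaction_set_def feasible_profile_def)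
    show ?thesis unfolding satisfactory_pareto_optimal_def
    proof (intro ballI allI impI)
      fix i p assume i: "i \<in> {1..N}" and p: "0 \<le> p \<and> p \<le> Pmax i"
        and incr: "throughput N h \<eta> (P(i := p)) i > throughput N h \<eta> P i"
      let ?Q = "P(i := p)"
      have Qnn: "\<forall>j\<in>{1..N}. 0 \<le> ?Q j" using Pnn p by auto
      define D where "D = \<eta> + (\<Sum>j\<in>{1..N} - {i}. h j * P j)"
      have DQ: "(\<Sum>j\<in>{1..N} - {i}. h j * ?Q j) = (\<Sum>j\<in>{1..N} - {i}. h j * P j)"
        by (intro sum.cong) auto
      have "(\<Sum>j\<in>{1..N} - {i}. h j * P j) \<ge> 0"
        using Pnn hp by (intro sum_nonneg) (simp add: less_imp_le)
      then have D: "D > 0" unfolding D_def using eta by linarith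
      have pgt: "p > P i"
      proof (rule ccontr)
        assume "\<not> p > P i"
        then have "h i * p \<le> h i * P i" using hp i by simp
        then have le: "1 + h i * p / D \<le> 1 + h i * P i / D" using D by (simp add: divide_right_mono)
        have "h i * p / D \<ge> 0" using D p hp i by (simp add: less_imp_le)
        then have pos: "1 + h i * p / D > 0" by linarith
        have "throughput N h \<eta> ?Q i \<le> throughput N h \<eta> P i"
          unfolding throughput_def DQ D_def[symmetric] using le pos by simp
        then show False using incr by simp
      qed
      have TQ: "T ?Q = T P + h i * (p - P i)"
      proof -
        have "T ?Q = h i * p + (\<Sum>j\<in>{1..N} - {i}. h j * ?Q j)"
          unfolding T_def using sum.remove[of "{1..N}" i "\<lambda>j. h j * ?Q j"] i by simp
        moreover have "T P = h i * P i + (\<Sum>j\<in>{1..N} - {i}. h j * P j)"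
          unfolding T_def using sum.remove[of "{1..N}" i "\<lambda>j. h j * P j"] i by simp
        ultimately show ?thesis using DQ by (simp add: algebra_simps)
      qed
      have TQgt: "T ?Q > T P" using TQ pgt hp i by simp
      obtain j where j: "j \<in> {1..N}" "j \<noteq> i"
      proof (cases "i = 1")
        case True then show ?thesis using that[of 2] N by auto
      next
        case False then show ?thesis using that[of 1] N by auto
      qed
      have "h j * ?Q j < a j * (\<eta> + T ?Q)"
        using hP[OF j(1)] j(2) apos[OF j(1)] TQgt by simp
      then have "\<not> throughput N h \<eta> ?Q j \<ge> \<theta> j"
        using thr_iff[OF j(1) Qnn hp eta, of "\<theta> j"] unfolding a_def T_def by linarith
      then show "\<exists>j\<in>{1..N}. j \<noteq> i \<and> throughput N h \<eta> ?Q j < \<theta> j"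
        using j by (intro bexI[of _ j]) auto
    qed
  qed
  then show ?thesis using effPs by blast
qed

end
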